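(* Let $\Gamma=(V,E,\psi)$ be a multigraph without loops. Then $\Gamma$ is a $G$-graph (i.e. $\Gamma\cong\Phi(G,S)$ for some group $G$ and multiset $S$ of elements of $G$) if and only if there exist a subgroup $H$ of $Aut(\Gamma)$ and a clique $C\subseteq V$ such that: (1) each orbit of the action of $H$ on $V$ is a stable set; (2) $C$ intersects every orbit of the action of $H$ on $V$; (3) for every $u\in C$, $Stab_H u$ is cyclic; (4) for every $u\in C$ and every orbit $O$ of $H$ with $u\notin O$, $Stab_H u$ acts regularly on the set of edges incident to $u$ whose other end-point lies in $O$.
   Context: A multigraph is a triple $(V,E,\psi)$ where $\psi$ assigns to each edge an unordered pair of vertices; parallel edges allowed. Automorphisms are pairs $(f,f^\#)$ of bijections of vertices and edges compatible with $\psi$, so $Aut(\Gamma)$ acts on $V$ and $E$. A clique is a set of pairwise adjacent vertices; a stable set is a set of pairwise non-adjacent vertices. An action is regular on $X$ if for all $x,y\in X$ exactly one group element sends $x$ to $y$. For a group $G$ and a multiset $S$ of elements of $G$, $\Phi(G,S)$ is the multigraph whose vertex set is the union over the members $s$ of $S$ (with multiplicity, a repeated element giving a separate copy of its cosets per occurrence) of $V_s=\{\langle s\rangle x: x\in G\}$ (right cosets), with, for $\langle s\rangle x\in V_s$, $\langle t\rangle y\in V_t$, $s,t$ distinct members of $S$, one edge labeled $g$ between them for each $g\in\langle s\rangle x\cap\langle t\rangle y$, and no other edges. A $G$-graph is a multigraph isomorphic (ignoring labels) to some $\Phi(G,S)$. *)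

theory Defs
  imports "HOL-Algebra.Coset" "HOL-Algebra.Generated_Groups" "HOL-Algebra.Elementary_Groups"
begin

definition loopless_multigraph :: "'v set \<Rightarrow> 'e set \<Rightarrow> ('e \<Rightarrow> 'v set) \<Rightarrow> bool" where
  "loopless_multigraph V E \<psi> \<longleftrightarrow>
     (\<forall>e\<in>E. \<exists>u w. u \<in> V \<and> w \<in> V \<and> u \<noteq> w \<and> \<psi> e = {u, w})"

definition mg_iso :: "'v set \<Rightarrow> 'e set \<Rightarrow> ('e \<Rightarrow> 'v set) \<Rightarrow>
                      'w set \<Rightarrow> 'f set \<Rightarrow> ('f \<Rightarrow> 'w set) \<Rightarrow> bool" where
  "mg_iso V E \<psi> V' E' \<psi>' \<longleftrightarrow>
     (\<exists>f g. bij_betw f V V' \<and> bij_betw g E E' \<and> (\<forall>e\<in>E. \<psi>' (g e) = f ` \<psi> e))"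

text \<open>Automorphisms: pairs (f, f#) of bijections of V and E compatible with psi.
  To obtain a canonical representation they are required to be the identity off V resp. E.\<close>
definition aut :: "'v set \<Rightarrow> 'e set \<Rightarrow> ('e \<Rightarrow> 'v set) \<Rightarrow> (('v \<Rightarrow> 'v) \<times> ('e \<Rightarrow> 'e)) set" where
  "aut V E \<psi> = {(f, g). bij_betw f V V \<and> bij_betw g E E \<and>
       (\<forall>x. x \<notin> V \<longrightarrow> f x = x) \<and> (\<forall>e. e \<notin> E \<longrightarrow> g e = e) \<and>
       (\<forall>e\<in>E. \<psi> (g e) = f ` \<psi> e)}"

definition AutGroup :: "'v set \<Rightarrow> 'e set \<Rightarrow> ('e \<Rightarrow> 'v set) \<Rightarrow> (('v \<Rightarrow> 'v) \<times> ('e \<Rightarrow> 'e)) monoid" where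
  "AutGroup V E \<psi> = \<lparr>carrier = aut V E \<psi>,
      mult = (\<lambda>a b. (fst a \<circ> fst b, snd a \<circ> snd b)), one = (id, id)\<rparr>"

definition vorbit :: "(('v \<Rightarrow> 'v) \<times> ('e \<Rightarrow> 'e)) set \<Rightarrow> 'v \<Rightarrow> 'v set" where
  "vorbit H v = (\<lambda>h. fst h v) ` H"

definition vorbits :: "(('v \<Rightarrow> 'v) \<times> ('e \<Rightarrow> 'e)) set \<Rightarrow> 'v set \<Rightarrow> 'v set set" where
  "vorbits H V = vorbit H ` V"

definition vstab :: "(('v \<Rightarrow> 'v) \<times> ('e \<Rightarrow> 'e)) set \<Rightarrow> 'v \<Rightarrow> (('v \<Rightarrow> 'v) \<times> ('e \<Rightarrow> 'e)) set" where
  "vstab H u = {h \<in> H. fst h u = u}"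

definition adjacent :: "'e set \<Rightarrow> ('e \<Rightarrow> 'v set) \<Rightarrow> 'v \<Rightarrow> 'v \<Rightarrow> bool" where
  "adjacent E \<psi> u v \<longleftrightarrow> (\<exists>e\<in>E. \<psi> e = {u, v})"

definition clique :: "'v set \<Rightarrow> 'e set \<Rightarrow> ('e \<Rightarrow> 'v set) \<Rightarrow> 'v set \<Rightarrow> bool" where
  "clique V E \<psi> C \<longleftrightarrow> C \<subseteq> V \<and> (\<forall>u\<in>C. \<forall>v\<in>C. u \<noteq> v \<longrightarrow> adjacent E \<psi> u v)"

definition stable_set :: "'v set \<Rightarrow> 'e set \<Rightarrow> ('e \<Rightarrow> 'v set) \<Rightarrow> 'v set \<Rightarrow> bool" where
  "stable_set V E \<psi> S \<longleftrightarrow> S \<subseteq> V \<and> (\<forall>u\<in>S. \<forall>v\<in>S. u \<noteq> v \<longrightarrow> \<not> adjacent E \<psi> u v)"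

definition edges_to :: "'e set \<Rightarrow> ('e \<Rightarrow> 'v set) \<Rightarrow> 'v \<Rightarrow> 'v set \<Rightarrow> 'e set" where
  "edges_to E \<psi> u Orb = {e \<in> E. \<exists>w\<in>Orb. \<psi> e = {u, w}}"

definition regular_action :: "'g set \<Rightarrow> ('g \<Rightarrow> 'x \<Rightarrow> 'x) \<Rightarrow> 'x set \<Rightarrow> bool" where
  "regular_action K act X \<longleftrightarrow> (\<forall>x\<in>X. \<forall>y\<in>X. \<exists>!k. k \<in> K \<and> act k x = y)"

text \<open>The multiset S is represented as a family s indexed by I
  (each index is one occurrence of an element). A vertex is a pair (i, <s i> x) (copy i of
  the right coset); an edge is the pair (set of its two end-points, label g).\<close>
definition PhiV :: "('g, 'b) monoid_scheme \<Rightarrow> 'i set \<Rightarrow> ('i \<Rightarrow> 'g) \<Rightarrow> ('i \<times> 'g set) set" where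
  "PhiV G I s = {(i, generate G {s i} #>\<^bsub>G\<^esub> x) | i x. i \<in> I \<and> x \<in> carrier G}"

definition PhiE :: "('g, 'b) monoid_scheme \<Rightarrow> 'i set \<Rightarrow> ('i \<Rightarrow> 'g)
                    \<Rightarrow> (('i \<times> 'g set) set \<times> 'g) set" where
  "PhiE G I s = {({(i, A), (j, B)}, g) | i j A B g.
       i \<in> I \<and> j \<in> I \<and> i \<noteq> j \<and> (i, A) \<in> PhiV G I s \<and> (j, B) \<in> PhiV G I s \<and> g \<in> A \<inter> B}"

definition PhiPsi :: "(('i \<times> 'g set) set \<times> 'g) \<Rightarrow> ('i \<times> 'g set) set" where
  "PhiPsi = fst"

definition G_graph_via :: "('g, 'b) monoid_scheme \<Rightarrow> 'i set \<Rightarrow> ('i \<Rightarrow> 'g)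
                            \<Rightarrow> 'v set \<Rightarrow> 'e set \<Rightarrow> ('e \<Rightarrow> 'v set) \<Rightarrow> bool" where
  "G_graph_via G I s V E \<psi> \<longleftrightarrow> group G \<and> s ` I \<subseteq> carrier G \<and>
      mg_iso (PhiV G I s) (PhiE G I s) PhiPsi V E \<psi>"

definition char_conditions :: "'v set \<Rightarrow> 'e set \<Rightarrow> ('e \<Rightarrow> 'v set)
     \<Rightarrow> (('v \<Rightarrow> 'v) \<times> ('e \<Rightarrow> 'e)) set \<Rightarrow> 'v set \<Rightarrow> bool" where
  "char_conditions V E \<psi> H C \<longleftrightarrow>
     subgroup H (AutGroup V E \<psi>) \<and> clique V E \<psi> C \<and>
     (\<forall>Orb\<in>vorbits H V. stable_set V E \<psi> Orb) \<and>
     (\<forall>Orb\<in>vorbits H V. C \<inter> Orb \<noteq> {}) \<and>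
     (\<forall>u\<in>C. cyclic_group (subgroup_generated (AutGroup V E \<psi>) (vstab H u))) \<and>
     (\<forall>u\<in>C. \<forall>Orb\<in>vorbits H V. u \<notin> Orb \<longrightarrow>
        regular_action (vstab H u) (\<lambda>h e. snd h e) (edges_to E \<psi> u Orb))"

end

theory Submission
  imports Defs
begin


lemma aut_closed:
  assumes "a \<in> aut V E \<psi>" "b \<in> aut V E \<psi>"
  shows "(fst a \<circ> fst b, snd a \<circ> snd b) \<in> aut V E \<psi>"
proof -
  obtain f1 g1 where a: "a = (f1,g1)" by fastforce
  obtain f2 g2 where b: "b = (f2,g2)" by fastforce
  have 1: "bij_betw f1 V V" "bij_betw g1 E E" "\<forall>x. x \<notin> V \<longrightarrow> f1 x = x" "\<forall>e. e \<notin> E \<longrightarrow> g1 e = e"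
     "\<forall>e\<in>E. \<psi> (g1 e) = f1 ` \<psi> e" using assms(1) unfolding a aut_def by auto
  have 2: "bij_betw f2 V V" "bij_betw g2 E E" "\<forall>x. x \<notin> V \<longrightarrow> f2 x = x" "\<forall>e. e \<notin> E \<longrightarrow> g2 e = e"
     "\<forall>e\<in>E. \<psi> (g2 e) = f2 ` \<psi> e" using assms(2) unfolding b aut_def by auto
  have "\<forall>e\<in>E. \<psi> (g1 (g2 e)) = f1 ` f2 ` \<psi> e"
    using 1(5) 2(5) bij_betw_apply[OF 2(2)] by simp
  then show ?thesis unfolding a b aut_def using 1 2
    by (simp add: bij_betw_trans image_comp)
qed

lemma aut_group:
  assumes psiV: "\<forall>e\<in>E. \<psi> e \<subseteq> V"
  shows "group (AutGroup V E \<psi>)"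
proof (rule groupI)
  show "\<And>x y. x \<in> carrier (AutGroup V E \<psi>) \<Longrightarrow> y \<in> carrier (AutGroup V E \<psi>) \<Longrightarrow>
     x \<otimes>\<^bsub>AutGroup V E \<psi>\<^esub> y \<in> carrier (AutGroup V E \<psi>)"
    by (simp add: AutGroup_def aut_closed)
  show "\<one>\<^bsub>AutGroup V E \<psi>\<^esub> \<in> carrier (AutGroup V E \<psi>)"
    by (simp add: AutGroup_def aut_def)
  show "\<And>x y z. x \<in> carrier (AutGroup V E \<psi>) \<Longrightarrow> y \<in> carrier (AutGroup V E \<psi>) \<Longrightarrow>
       z \<in> carrier (AutGroup V E \<psi>) \<Longrightarrow>
       x \<otimes>\<^bsub>AutGroup V E \<psi>\<^esub> y \<otimes>\<^bsub>AutGroup V E \<psi>\<^esub> z =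
       x \<otimes>\<^bsub>AutGroup V E \<psi>\<^esub> (y \<otimes>\<^bsub>AutGroup V E \<psi>\<^esub> z)"
    unfolding AutGroup_def by (simp add: o_assoc)
  show "\<And>x. x \<in> carrier (AutGroup V E \<psi>) \<Longrightarrow> \<one>\<^bsub>AutGroup V E \<psi>\<^esub> \<otimes>\<^bsub>AutGroup V E \<psi>\<^esub> x = x"
    by (simp add: AutGroup_def)
  fix x assume "x \<in> carrier (AutGroup V E \<psi>)"
  moreover obtain f g where x: "x = (f,g)" by fastforce
  ultimately have fg: "(f,g) \<in> aut V E \<psi>" by (simp add: AutGroup_def)
  have bf: "bij_betw f V V" and bg: "bij_betw g E E" and fo: "\<forall>x. x \<notin> V \<longrightarrow> f x = x"
    and go: "\<forall>e. e \<notin> E \<longrightarrow> g e = e" and comp: "\<forall>e\<in>E. \<psi> (g e) = f ` \<psi> e"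
    using fg by (auto simp: aut_def)
  define f' where "f' = (\<lambda>v. if v \<in> V then inv_into V f v else v)"
  define g' where "g' = (\<lambda>e. if e \<in> E then inv_into E g e else e)"
  have bf': "bij_betw f' V V"
    using bij_betw_inv_into[OF bf] unfolding f'_def by (rule bij_betw_cong[THEN iffD1, rotated]) auto
  have bg': "bij_betw g' E E"
    using bij_betw_inv_into[OF bg] unfolding g'_def by (rule bij_betw_cong[THEN iffD1, rotated]) auto
  have ff: "f' (f v) = v" for v
  proof (cases "v \<in> V")
    case True
    then show ?thesis unfolding f'_def using bf
      by (simp add: bij_betw_def bij_betw_apply[OF bf] inv_into_f_f)
  next
    case False then show ?thesis using fo unfolding f'_def by auto
  qed
  have gg: "g' (g e) = e" for e
  proof (cases "e \<in> E")
    case True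
    then show ?thesis unfolding g'_def using bg
      by (simp add: bij_betw_def bij_betw_apply[OF bg] inv_into_f_f)
  next
    case False then show ?thesis using go unfolding g'_def by auto
  qed
  have gg2: "g (g' e) = e" if "e \<in> E" for e
    using that bg unfolding g'_def by (simp add: bij_betw_def f_inv_into_f)
  have comp': "\<forall>e\<in>E. \<psi> (g' e) = f' ` \<psi> e"
  proof
    fix e assume e: "e \<in> E"
    have "g' e \<in> E" using bg' e by (simp add: bij_betw_apply)
    then have "\<psi> e = f ` \<psi> (g' e)" using comp gg2[OF e] by metis
    then have "f' ` \<psi> e = f' ` f ` \<psi> (g' e)" by simp
    also have "\<dots> = \<psi> (g' e)" by (simp add: image_comp ff comp_def)
    finally show "\<psi> (g' e) = f' ` \<psi> e" by simp
  qed
  have "(f', g') \<in> aut V E \<psi>"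
    unfolding aut_def using bf' bg' comp' by (auto simp: f'_def g'_def)
  moreover have "(f', g') \<otimes>\<^bsub>AutGroup V E \<psi>\<^esub> x = \<one>\<^bsub>AutGroup V E \<psi>\<^esub>"
    unfolding x AutGroup_def by (auto simp: ff gg)
  ultimately show "\<exists>y\<in>carrier (AutGroup V E \<psi>). y \<otimes>\<^bsub>AutGroup V E \<psi>\<^esub> x = \<one>\<^bsub>AutGroup V E \<psi>\<^esub>"
    by (intro bexI[of _ "(f',g')"]) (auto simp: AutGroup_def)
qed

lemma AutGroup_simps [simp]:
  "carrier (AutGroup V E \<psi>) = aut V E \<psi>"
  "a \<otimes>\<^bsub>AutGroup V E \<psi>\<^esub> b = (fst a \<circ> fst b, snd a \<circ> snd b)"
  "\<one>\<^bsub>AutGroup V E \<psi>\<^esub> = (id, id)"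
  by (simp_all add: AutGroup_def)

lemma cyclic_sub_iff:
  assumes "group A" "subgroup K A"
  shows "cyclic_group (subgroup_generated A K) \<longleftrightarrow> (\<exists>x\<in>K. K = generate A {x})"
proof
  interpret group A by fact
  have SG: "subgroup_generated A K = A\<lparr>carrier := K\<rparr>"
    using assms(2) unfolding subgroup_generated_def
    by (metis (no_types) assms(2) carrier_subgroup_generated subgroup.carrier_subgroup_generated_subgroup subgroup_generated_def)
  assume "cyclic_group (subgroup_generated A K)"
  then obtain x where x: "x \<in> K" and eq: "subgroup_generated (A\<lparr>carrier := K\<rparr>) {x} = A\<lparr>carrier := K\<rparr>"
    unfolding cyclic_group_def SG by auto
  have "carrier (subgroup_generated (A\<lparr>carrier := K\<rparr>) {x}) = generate A {x}"
    using x by (simp add: carrier_subgroup_generated generate_consistent assms(2))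
  with eq x show "\<exists>x\<in>K. K = generate A {x}" by (metis partial_object.select_convs(1) partial_object.surjective partial_object.update_convs(1))
next
  interpret group A by fact
  assume "\<exists>x\<in>K. K = generate A {x}"
  then obtain x where x: "x \<in> K" "K = generate A {x}" by blast
  have xc: "x \<in> carrier A" by (rule subgroup.mem_carrier[OF assms(2) x(1)])
  have "subgroup_generated A K = subgroup_generated A {x}"
  proof -
    have 1: "carrier A \<inter> K = K" using subgroup.subset[OF assms(2)] by blast
    have 2: "generate A K = K"
      using generate_subgroup_incl[OF order_refl assms(2)] generate.incl[of _ K A] by blast
    have 3: "carrier A \<inter> {x} = {x}" using xc by blast
    show ?thesis unfolding subgroup_generated_def 1 2 3 using x(2) by simp
  qed
  then show "cyclic_group (subgroup_generated A K)" by (simp add: cyclic_group_generated)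
qed



locale d2 =
  fixes V :: "'v set" and E :: "'e set" and \<psi> :: "'e \<Rightarrow> 'v set"
    and H :: "(('v \<Rightarrow> 'v) \<times> ('e \<Rightarrow> 'e)) set" and C :: "'v set"
  assumes lm: "loopless_multigraph V E \<psi>" and cc: "char_conditions V E \<psi> H C"
begin

abbreviation "A \<equiv> AutGroup V E \<psi>"

lemma psiV: "e \<in> E \<Longrightarrow> \<psi> e \<subseteq> V"
  using lm unfolding loopless_multigraph_def by force

lemma grpA: "group A"
  by (rule aut_group) (simp add: psiV)

sublocale gA: group A by (rule grpA)

lemma subH: "subgroup H A" using cc unfolding char_conditions_def by blast
lemma cliq: "clique V E \<psi> C" using cc unfolding char_conditions_def by blast
lemma stab: "Orb \<in> vorbits H V \<Longrightarrow> stable_set V E \<psi> Orb" using cc unfolding char_conditions_def by blast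
lemma meet: "Orb \<in> vorbits H V \<Longrightarrow> C \<inter> Orb \<noteq> {}" using cc unfolding char_conditions_def by blast
lemma cyc: "u \<in> C \<Longrightarrow> cyclic_group (subgroup_generated A (vstab H u))" using cc unfolding char_conditions_def by blast
lemma reg: "u \<in> C \<Longrightarrow> Orb \<in> vorbits H V \<Longrightarrow> u \<notin> Orb \<Longrightarrow>
        regular_action (vstab H u) (\<lambda>h e. snd h e) (edges_to E \<psi> u Orb)"
  using cc unfolding char_conditions_def by blast

lemma Hc: "h \<in> H \<Longrightarrow> h \<in> carrier A" using subgroup.mem_carrier[OF subH] .
lemma Haut: "h \<in> H \<Longrightarrow> h \<in> aut V E \<psi>" using Hc by simp
lemma actV: "h \<in> H \<Longrightarrow> v \<in> V \<Longrightarrow> fst h v \<in> V"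
  using Haut[of h] unfolding aut_def by (auto simp: bij_betw_apply)
lemma actE: "h \<in> H \<Longrightarrow> e \<in> E \<Longrightarrow> snd h e \<in> E"
  using Haut[of h] unfolding aut_def by (auto simp: bij_betw_apply)
lemma actpsi: "h \<in> H \<Longrightarrow> e \<in> E \<Longrightarrow> \<psi> (snd h e) = fst h ` \<psi> e"
  using Haut[of h] unfolding aut_def by auto
lemma invH: "h \<in> H \<Longrightarrow> inv\<^bsub>A\<^esub> h \<in> H" using subgroup.m_inv_closed[OF subH] .
lemma multH: "a \<in> H \<Longrightarrow> b \<in> H \<Longrightarrow> a \<otimes>\<^bsub>A\<^esub> b \<in> H" using subgroup.m_closed[OF subH] .
lemma oneH: "(id, id) \<in> H" using subgroup.one_closed[OF subH] by simp

lemma inv_fst1: "h \<in> H \<Longrightarrow> fst (inv\<^bsub>A\<^esub> h) (fst h v) = v"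
proof -
  assume h: "h \<in> H"
  have "inv\<^bsub>A\<^esub> h \<otimes>\<^bsub>A\<^esub> h = \<one>\<^bsub>A\<^esub>" using gA.l_inv[OF Hc[OF h]] .
  then have "fst (inv\<^bsub>A\<^esub> h) \<circ> fst h = id" by simp
  then show ?thesis by (metis comp_apply id_apply)
qed
lemma inv_fst2: "h \<in> H \<Longrightarrow> fst h (fst (inv\<^bsub>A\<^esub> h) v) = v"
proof -
  assume h: "h \<in> H"
  have "h \<otimes>\<^bsub>A\<^esub> inv\<^bsub>A\<^esub> h = \<one>\<^bsub>A\<^esub>" using gA.r_inv[OF Hc[OF h]] .
  then have "fst h \<circ> fst (inv\<^bsub>A\<^esub> h) = id" by simp
  then show ?thesis by (metis comp_apply id_apply)
qed
lemma inv_snd1: "h \<in> H \<Longrightarrow> snd (inv\<^bsub>A\<^esub> h) (snd h v) = v"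
proof -
  assume h: "h \<in> H"
  have "inv\<^bsub>A\<^esub> h \<otimes>\<^bsub>A\<^esub> h = \<one>\<^bsub>A\<^esub>" using gA.l_inv[OF Hc[OF h]] .
  then have "snd (inv\<^bsub>A\<^esub> h) \<circ> snd h = id" by simp
  then show ?thesis by (metis comp_apply id_apply)
qed
lemma inv_snd2: "h \<in> H \<Longrightarrow> snd h (snd (inv\<^bsub>A\<^esub> h) v) = v"
proof -
  assume h: "h \<in> H"
  have "h \<otimes>\<^bsub>A\<^esub> inv\<^bsub>A\<^esub> h = \<one>\<^bsub>A\<^esub>" using gA.r_inv[OF Hc[OF h]] .
  then have "snd h \<circ> snd (inv\<^bsub>A\<^esub> h) = id" by simp
  then show ?thesis by (metis comp_apply id_apply)
qed

lemma in_orb: "h \<in> H \<Longrightarrow> fst h v \<in> vorbit H v"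
  unfolding vorbit_def by blast
lemma self_orb: "v \<in> vorbit H v"
  using in_orb[OF oneH, of v] by simp
lemma orb_eq: assumes "w \<in> vorbit H v" shows "vorbit H w = vorbit H v"
proof -
  obtain h where h: "h \<in> H" "w = fst h v" using assms unfolding vorbit_def by blast
  show ?thesis
  proof
    show "vorbit H w \<subseteq> vorbit H v"
    proof
      fix z assume "z \<in> vorbit H w"
      then obtain k where k: "k \<in> H" "z = fst k w" unfolding vorbit_def by blast
      have "z = fst (k \<otimes>\<^bsub>A\<^esub> h) v" using k h by simp
      then show "z \<in> vorbit H v" using in_orb multH k h by metis
    qed
    show "vorbit H v \<subseteq> vorbit H w"
    proof
      fix z assume "z \<in> vorbit H v"
      then obtain k where k: "k \<in> H" "z = fst k v" unfolding vorbit_def by blast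
      have "z = fst (k \<otimes>\<^bsub>A\<^esub> inv\<^bsub>A\<^esub> h) w" using k h inv_fst1[of h v] by simp
      then show "z \<in> vorbit H w" using in_orb multH invH k h by metis
    qed
  qed
qed
lemma orb_sym: "w \<in> vorbit H v \<Longrightarrow> v \<in> vorbit H w"
  using orb_eq self_orb by blast

lemma orbits_in: "v \<in> V \<Longrightarrow> vorbit H v \<in> vorbits H V"
  unfolding vorbits_def by blast

lemma CV: "C \<subseteq> V" using cliq unfolding clique_def by blast

lemma C_unique: assumes "c \<in> C" "c' \<in> C" "c' \<in> vorbit H c" shows "c' = c"
proof (rule ccontr)
  assume ne: "c' \<noteq> c"
  have "adjacent E \<psi> c' c" using cliq assms ne unfolding clique_def by blast
  moreover have "stable_set V E \<psi> (vorbit H c)" using stab orbits_in CV assms(1) by blast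
  ultimately show False using assms(3) self_orb[of c] ne unfolding stable_set_def by blast
qed

lemma C_meet: assumes "v \<in> V" obtains c where "c \<in> C" "c \<in> vorbit H v"
  using meet[OF orbits_in[OF assms]] by blast

lemma vstab_sub: "subgroup (vstab H c) A"
proof (rule gA.subgroupI)
  show "vstab H c \<subseteq> carrier A" using Hc unfolding vstab_def by blast
  show "vstab H c \<noteq> {}" using oneH unfolding vstab_def by force
  fix a b assume a: "a \<in> vstab H c" and b: "b \<in> vstab H c"
  then have aH: "a \<in> H" and ac: "fst a c = c" and bH: "b \<in> H" and bc: "fst b c = c"
    unfolding vstab_def by auto
  have "fst (inv\<^bsub>A\<^esub> a) c = c" using inv_fst1[OF aH, of c] ac by simp
  then show "inv\<^bsub>A\<^esub> a \<in> vstab H c" using invH[OF aH] unfolding vstab_def by blast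
  have "fst (a \<otimes>\<^bsub>A\<^esub> b) c = c" using ac bc by simp
  then show "a \<otimes>\<^bsub>A\<^esub> b \<in> vstab H c" using multH[OF aH bH] unfolding vstab_def by blast
qed

lemma vstab_H: "vstab H c \<subseteq> H" unfolding vstab_def by blast

definition gen :: "'v \<Rightarrow> ('v \<Rightarrow> 'v) \<times> ('e \<Rightarrow> 'e)" where
  "gen c = (SOME x. x \<in> vstab H c \<and> vstab H c = generate A {x})"

lemma gen: assumes "c \<in> C" shows "gen c \<in> vstab H c" "vstab H c = generate A {gen c}"
proof -
  have "\<exists>x\<in>vstab H c. vstab H c = generate A {x}"
    using cyclic_sub_iff[OF grpA vstab_sub] cyc[OF assms] by blast
  then have "\<exists>x. x \<in> vstab H c \<and> vstab H c = generate A {x}" by blast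
  then have "gen c \<in> vstab H c \<and> vstab H c = generate A {gen c}"
    unfolding gen_def by (rule someI_ex)
  then show "gen c \<in> vstab H c" "vstab H c = generate A {gen c}" by auto
qed

lemma cos_eq: assumes "x \<in> H" "y \<in> H"
  shows "vstab H c #>\<^bsub>A\<^esub> x = vstab H c #>\<^bsub>A\<^esub> y \<longleftrightarrow> fst (inv\<^bsub>A\<^esub> x) c = fst (inv\<^bsub>A\<^esub> y) c"
proof -
  have xc: "x \<in> carrier A" and yc: "y \<in> carrier A" using Hc assms by auto
  have KA: "vstab H c \<subseteq> carrier A" using vstab_H Hc by blast
  have "vstab H c #>\<^bsub>A\<^esub> x = vstab H c #>\<^bsub>A\<^esub> y \<longleftrightarrow> x \<otimes>\<^bsub>A\<^esub> inv\<^bsub>A\<^esub> y \<in> vstab H c"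
  proof
    assume "vstab H c #>\<^bsub>A\<^esub> x = vstab H c #>\<^bsub>A\<^esub> y"
    then have "vstab H c #>\<^bsub>A\<^esub> (x \<otimes>\<^bsub>A\<^esub> inv\<^bsub>A\<^esub> y) = vstab H c"
      using gA.coset_mult_inv2 xc yc KA by blast
    then show "x \<otimes>\<^bsub>A\<^esub> inv\<^bsub>A\<^esub> y \<in> vstab H c"
      using gA.coset_join1 vstab_sub xc yc by blast
  next
    assume "x \<otimes>\<^bsub>A\<^esub> inv\<^bsub>A\<^esub> y \<in> vstab H c"
    then have "vstab H c #>\<^bsub>A\<^esub> (x \<otimes>\<^bsub>A\<^esub> inv\<^bsub>A\<^esub> y) = vstab H c"
      using gA.coset_join2 vstab_sub xc yc by blast
    then show "vstab H c #>\<^bsub>A\<^esub> x = vstab H c #>\<^bsub>A\<^esub> y"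
      using gA.coset_mult_inv1 xc yc KA by blast
  qed
  also have "\<dots> \<longleftrightarrow> fst x (fst (inv\<^bsub>A\<^esub> y) c) = c"
    using multH[OF assms(1) invH[OF assms(2)]] unfolding vstab_def by simp
  also have "\<dots> \<longleftrightarrow> fst (inv\<^bsub>A\<^esub> x) c = fst (inv\<^bsub>A\<^esub> y) c"
    using inv_fst1[OF assms(1)] inv_fst2[OF assms(1)] by metis
  finally show ?thesis .
qed

definition fV :: "'v \<times> (('v \<Rightarrow> 'v) \<times> ('e \<Rightarrow> 'e)) set \<Rightarrow> 'v" where
  "fV p = fst (inv\<^bsub>A\<^esub> (SOME x. x \<in> H \<and> snd p = vstab H (fst p) #>\<^bsub>A\<^esub> x)) (fst p)"

lemma fV_eq: assumes "x \<in> H" shows "fV (c, vstab H c #>\<^bsub>A\<^esub> x) = fst (inv\<^bsub>A\<^esub> x) c"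
proof -
  define y where "y = (SOME y. y \<in> H \<and> vstab H c #>\<^bsub>A\<^esub> x = vstab H c #>\<^bsub>A\<^esub> y)"
  have "\<exists>y. y \<in> H \<and> vstab H c #>\<^bsub>A\<^esub> x = vstab H c #>\<^bsub>A\<^esub> y" using assms by blast
  then have y: "y \<in> H \<and> vstab H c #>\<^bsub>A\<^esub> x = vstab H c #>\<^bsub>A\<^esub> y"
    unfolding y_def by (rule someI_ex)
  have "fV (c, vstab H c #>\<^bsub>A\<^esub> x) = fst (inv\<^bsub>A\<^esub> y) c"
    unfolding fV_def y_def by simp
  also have "\<dots> = fst (inv\<^bsub>A\<^esub> x) c" using y cos_eq[OF assms conjunct1[OF y], of c] by simp
  finally show ?thesis .
qed

definition PV where "PV = {(c, vstab H c #>\<^bsub>A\<^esub> x) | c x. c \<in> C \<and> x \<in> H}"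

lemma fV_bij: "bij_betw fV PV V"
proof (rule bij_betw_imageI)
  show "inj_on fV PV"
  proof
    fix p q assume "p \<in> PV" "q \<in> PV" and eq: "fV p = fV q"
    then obtain c x c' y where p: "p = (c, vstab H c #>\<^bsub>A\<^esub> x)" "c \<in> C" "x \<in> H"
      and q: "q = (c', vstab H c' #>\<^bsub>A\<^esub> y)" "c' \<in> C" "y \<in> H" unfolding PV_def by blast
    have e1: "fst (inv\<^bsub>A\<^esub> x) c = fst (inv\<^bsub>A\<^esub> y) c'" using eq p q fV_eq by simp
    have "c' = fst y (fst (inv\<^bsub>A\<^esub> x) c)" using e1 inv_fst2[OF q(3)] by simp
    also have "\<dots> = fst (y \<otimes>\<^bsub>A\<^esub> inv\<^bsub>A\<^esub> x) c" by simp
    finally have "c' \<in> vorbit H c" using in_orb multH[OF q(3) invH[OF p(3)]] by metis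
    then have cc': "c' = c" using C_unique p q by blast
    then have "vstab H c #>\<^bsub>A\<^esub> x = vstab H c #>\<^bsub>A\<^esub> y" using cos_eq[OF p(3) q(3)] e1 by simp
    then show "p = q" using p q cc' by simp
  qed
  show "fV ` PV = V"
  proof
    show "fV ` PV \<subseteq> V"
    proof
      fix v assume "v \<in> fV ` PV"
      then obtain c x where "v = fV (c, vstab H c #>\<^bsub>A\<^esub> x)" "c \<in> C" "x \<in> H" unfolding PV_def by blast
      then show "v \<in> V" using fV_eq actV[OF invH] CV by (simp add: subset_iff)
    qed
    show "V \<subseteq> fV ` PV"
    proof
      fix v assume v: "v \<in> V"
      obtain c where c: "c \<in> C" "c \<in> vorbit H v" using C_meet[OF v] by blast
      then obtain h where h: "h \<in> H" "c = fst h v" unfolding vorbit_def by blast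
      have "v = fV (c, vstab H c #>\<^bsub>A\<^esub> h)" using fV_eq[OF h(1)] h inv_fst1 by simp
      moreover have "(c, vstab H c #>\<^bsub>A\<^esub> h) \<in> PV" unfolding PV_def using c h by blast
      ultimately show "v \<in> fV ` PV" by blast
    qed
  qed
qed

definition e0 :: "'v set \<Rightarrow> 'e" where "e0 Q = (SOME e. e \<in> E \<and> \<psi> e = Q)"

lemma e0: assumes "i \<in> C" "j \<in> C" "i \<noteq> j" shows "e0 {i,j} \<in> E" "\<psi> (e0 {i,j}) = {i,j}"
proof -
  have "adjacent E \<psi> i j" using cliq assms unfolding clique_def by blast
  then have "\<exists>e. e \<in> E \<and> \<psi> e = {i,j}" unfolding adjacent_def by blast
  then have "e0 {i,j} \<in> E \<and> \<psi> (e0 {i,j}) = {i,j}" unfolding e0_def by (rule someI_ex)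
  then show "e0 {i,j} \<in> E" "\<psi> (e0 {i,j}) = {i,j}" by auto
qed

lemma e0_sym: "e0 {i,j} = e0 {j,i}" by (simp add: insert_commute)

lemma not_in_orb: "i \<in> C \<Longrightarrow> j \<in> C \<Longrightarrow> i \<noteq> j \<Longrightarrow> i \<notin> vorbit H j"
  using C_unique by blast

lemma reg2: assumes "i \<in> C" "j \<in> C" "i \<noteq> j"
  shows "regular_action (vstab H i) (\<lambda>h e. snd h e) (edges_to E \<psi> i (vorbit H j))"
    "e0 {i,j} \<in> edges_to E \<psi> i (vorbit H j)"
proof -
  show "regular_action (vstab H i) (\<lambda>h e. snd h e) (edges_to E \<psi> i (vorbit H j))"
    using reg[OF assms(1) orbits_in not_in_orb[OF assms]] CV assms(2) by blast
  show "e0 {i,j} \<in> edges_to E \<psi> i (vorbit H j)"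
    unfolding edges_to_def using e0[OF assms] self_orb[of j] by blast
qed

lemma coset_H: assumes "x \<in> H" shows "vstab H c #>\<^bsub>A\<^esub> x \<subseteq> H"
  unfolding r_coset_def using multH[OF _ assms] vstab_H by blast

definition fE :: "('v \<times> (('v \<Rightarrow> 'v) \<times> ('e \<Rightarrow> 'e)) set) set \<times> (('v \<Rightarrow> 'v) \<times> ('e \<Rightarrow> 'e)) \<Rightarrow> 'e" where
  "fE x = snd (inv\<^bsub>A\<^esub> (snd x)) (e0 (fst ` fst x))"

lemma PV_mem: "c \<in> C \<Longrightarrow> x \<in> H \<Longrightarrow> (c, vstab H c #>\<^bsub>A\<^esub> x) \<in> PV"
  unfolding PV_def by blast

definition PE where "PE = {({(i,A'),(j,B)}, g) | i j A' B g.
       i \<in> C \<and> j \<in> C \<and> i \<noteq> j \<and> (i, A') \<in> PV \<and> (j, B) \<in> PV \<and> g \<in> A' \<inter> B}"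

abbreviation Eijg where "Eijg i j g \<equiv> ({(i, vstab H i #>\<^bsub>A\<^esub> g),(j, vstab H j #>\<^bsub>A\<^esub> g)}, g)"

lemma PV_char: assumes "(i, B) \<in> PV" shows "i \<in> C" "\<exists>x\<in>H. B = vstab H i #>\<^bsub>A\<^esub> x"
  using assms unfolding PV_def by auto

lemma cos_repr: assumes "x \<in> H" "g \<in> vstab H i #>\<^bsub>A\<^esub> x"
  shows "g \<in> H" "vstab H i #>\<^bsub>A\<^esub> x = vstab H i #>\<^bsub>A\<^esub> g"
  using coset_H[OF assms(1)] assms(2) apply blast
  using gA.repr_independence[OF assms(2) Hc[OF assms(1)] vstab_sub] .

lemma PE_char: "e \<in> PE \<longleftrightarrow> (\<exists>i j g. i \<in> C \<and> j \<in> C \<and> i \<noteq> j \<and> g \<in> H \<and> e = Eijg i j g)"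
proof
  assume "e \<in> PE"
  then obtain i j A' B g where e: "e = ({(i,A'),(j,B)}, g)" "i \<in> C" "j \<in> C" "i \<noteq> j"
    "(i, A') \<in> PV" "(j, B) \<in> PV" "g \<in> A'" "g \<in> B" unfolding PE_def by blast
  obtain x where x: "x \<in> H" "A' = vstab H i #>\<^bsub>A\<^esub> x" using PV_char(2)[OF e(5)] by blast
  obtain y where y: "y \<in> H" "B = vstab H j #>\<^bsub>A\<^esub> y" using PV_char(2)[OF e(6)] by blast
  have gH: "g \<in> H" using cos_repr(1)[OF x(1)] e(7) x(2) by blast
  have "A' = vstab H i #>\<^bsub>A\<^esub> g" using cos_repr(2)[OF x(1)] e(7) x(2) by blast
  moreover have "B = vstab H j #>\<^bsub>A\<^esub> g" using cos_repr(2)[OF y(1)] e(8) y(2) by blast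
  ultimately show "\<exists>i j g. i \<in> C \<and> j \<in> C \<and> i \<noteq> j \<and> g \<in> H \<and> e = Eijg i j g"
    using e gH by blast
next
  assume "\<exists>i j g. i \<in> C \<and> j \<in> C \<and> i \<noteq> j \<and> g \<in> H \<and> e = Eijg i j g"
  then obtain i j g where e: "i \<in> C" "j \<in> C" "i \<noteq> j" "g \<in> H" "e = Eijg i j g" by blast
  have "g \<in> vstab H i #>\<^bsub>A\<^esub> g" "g \<in> vstab H j #>\<^bsub>A\<^esub> g"
    using gA.rcos_self[OF Hc[OF e(4)] vstab_sub] by auto
  moreover have "(i, vstab H i #>\<^bsub>A\<^esub> g) \<in> PV" "(j, vstab H j #>\<^bsub>A\<^esub> g) \<in> PV"
    unfolding PV_def using e by blast+
  ultimately show "e \<in> PE" unfolding PE_def using e by blast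
qed

lemma fE_Eijg: "fE (Eijg i j g) = snd (inv\<^bsub>A\<^esub> g) (e0 {i,j})"
  unfolding fE_def by simp

lemma compat: assumes "i \<in> C" "j \<in> C" "i \<noteq> j" "g \<in> H"
  shows "\<psi> (fE (Eijg i j g)) = fV ` fst (Eijg i j g)"
  unfolding fE_Eijg using actpsi[OF invH[OF assms(4)] e0(1)[OF assms(1-3)]] e0(2)[OF assms(1-3)]
    fV_eq[OF assms(4)] by simp

lemma fE_bij: "bij_betw fE PE E"
proof (rule bij_betw_imageI)
  show "inj_on fE PE"
  proof
    fix e e' assume "e \<in> PE" "e' \<in> PE" and eq: "fE e = fE e'"
    then obtain i j g i' j' g' where e: "i \<in> C" "j \<in> C" "i \<noteq> j" "g \<in> H" "e = Eijg i j g"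
      and e': "i' \<in> C" "j' \<in> C" "i' \<noteq> j'" "g' \<in> H" "e' = Eijg i' j' g'"
      unfolding PE_char by blast
    have "\<psi> (fE e) = \<psi> (fE e')" using eq by simp
    then have "fV ` fst e = fV ` fst e'" using compat e e' by simp
    moreover have "fst e \<subseteq> PV" "fst e' \<subseteq> PV" unfolding e(5) e'(5) using PV_mem e e' by simp_all
    ultimately have P: "fst e = fst e'" using inj_on_image_eq_iff[OF bij_betw_imp_inj_on[OF fV_bij]] by blast
    then have ij: "{i,j} = {i',j'}" using e e' by (metis (no_types, lifting) fst_conv image_empty image_insert)
    have ci: "vstab H i #>\<^bsub>A\<^esub> g = vstab H i #>\<^bsub>A\<^esub> g'"
    proof -
      have "(i, vstab H i #>\<^bsub>A\<^esub> g) \<in> fst e'" using P e by auto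
      then show ?thesis using e' by auto
    qed
    have fi: "fst (inv\<^bsub>A\<^esub> g) i = fst (inv\<^bsub>A\<^esub> g') i" using ci cos_eq[OF e(4) e'(4)] by simp
    define h where "h = g' \<otimes>\<^bsub>A\<^esub> inv\<^bsub>A\<^esub> g"
    have hH: "h \<in> H" unfolding h_def using multH invH e e' by blast
    have "fst h i = i" unfolding h_def using fi inv_fst2[OF e'(4)] by simp
    then have hs: "h \<in> vstab H i" using hH unfolding vstab_def by blast
    have ee: "snd (inv\<^bsub>A\<^esub> g) (e0 {i,j}) = snd (inv\<^bsub>A\<^esub> g') (e0 {i,j})"
      using eq e e' ij fE_Eijg by metis
    have h1: "snd h (e0 {i,j}) = e0 {i,j}" unfolding h_def using ee inv_snd2[OF e'(4)] by simp
    have o1: "(id,id) \<in> vstab H i" using oneH unfolding vstab_def by simp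
    have U: "\<exists>!k. k \<in> vstab H i \<and> snd k (e0 {i,j}) = e0 {i,j}"
      using reg2(1)[OF e(1-3)] reg2(2)[OF e(1-3)] unfolding regular_action_def by blast
    then obtain k0 where k0: "\<And>k. k \<in> vstab H i \<and> snd k (e0 {i,j}) = e0 {i,j} \<Longrightarrow> k = k0"
      by (elim ex1E) blast
    have "h = k0" using k0 hs h1 by blast
    moreover have "(id,id) = k0" using k0 o1 by simp
    ultimately have "h = (id, id)" by simp
    then have "\<one>\<^bsub>A\<^esub> = g' \<otimes>\<^bsub>A\<^esub> inv\<^bsub>A\<^esub> g" unfolding h_def by (simp only: AutGroup_simps(3))
    then have "g' = \<one>\<^bsub>A\<^esub> \<otimes>\<^bsub>A\<^esub> g"
      using gA.inv_solve_right[OF gA.one_closed Hc[OF e'(4)] Hc[OF e(4)]] by blast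
    then have "g' = g" using gA.l_one[OF Hc[OF e(4)]] by simp
    then show "e = e'" using P e(5) e'(5) by (simp add: prod_eq_iff)
  qed
  show "fE ` PE = E"
  proof
    show "fE ` PE \<subseteq> E"
    proof
      fix x assume "x \<in> fE ` PE"
      then obtain p where "p \<in> PE" "x = fE p" by blast
      then obtain i j g where "i \<in> C" "j \<in> C" "i \<noteq> j" "g \<in> H" "x = fE (Eijg i j g)"
        unfolding PE_char by blast
      then show "x \<in> E" using fE_Eijg actE[OF invH e0(1)] by simp
    qed
    show "E \<subseteq> fE ` PE"
    proof
      fix e assume eE: "e \<in> E"
      then obtain a b where ab: "a \<in> V" "b \<in> V" "a \<noteq> b" "\<psi> e = {a,b}"
        using lm unfolding loopless_multigraph_def by blast
      obtain i where i: "i \<in> C" "i \<in> vorbit H a" using C_meet[OF ab(1)] by blast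
      obtain j where j: "j \<in> C" "j \<in> vorbit H b" using C_meet[OF ab(2)] by blast
      have ij: "i \<noteq> j"
      proof
        assume "i = j"
        then have "a \<in> vorbit H i" "b \<in> vorbit H i" using i j orb_sym by auto
        moreover have "stable_set V E \<psi> (vorbit H i)" using stab orbits_in CV i by blast
        moreover have "adjacent E \<psi> a b" using eE ab unfolding adjacent_def by blast
        ultimately show False using ab(3) unfolding stable_set_def by blast
      qed
      obtain x where x: "x \<in> H" "i = fst x a" using i unfolding vorbit_def by blast
      define e1 where "e1 = snd x e"
      have e1E: "e1 \<in> E" unfolding e1_def using actE[OF x(1) eE] .
      have pe1: "\<psi> e1 = {i, fst x b}" unfolding e1_def using actpsi[OF x(1) eE] ab x by simp
      have "fst x b \<in> vorbit H j" using in_orb[OF x(1)] orb_eq[OF j(2)] by blast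
      then have "e1 \<in> edges_to E \<psi> i (vorbit H j)" unfolding edges_to_def using e1E pe1 by blast
      then obtain k where k: "k \<in> vstab H i" "snd k (e0 {i,j}) = e1"
        using reg2[OF i(1) j(1) ij] unfolding regular_action_def by blast
      have kH: "k \<in> H" using k vstab_H by blast
      define g where "g = inv\<^bsub>A\<^esub> k \<otimes>\<^bsub>A\<^esub> x"
      have gH: "g \<in> H" unfolding g_def using multH invH kH x by blast
      have "inv\<^bsub>A\<^esub> g = inv\<^bsub>A\<^esub> x \<otimes>\<^bsub>A\<^esub> k"
        unfolding g_def using gA.inv_mult_group[OF gA.inv_closed[OF Hc[OF kH]] Hc[OF x(1)]]
          gA.inv_inv[OF Hc[OF kH]] by simp
      then have "fE (Eijg i j g) = e"
        unfolding fE_Eijg using k(2) e1_def inv_snd1[OF x(1)] by simp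
      moreover have "Eijg i j g \<in> PE" unfolding PE_char using i j ij gH by blast
      ultimately show "e \<in> fE ` PE" by blast
    qed
  qed
qed

lemma PhiV_eq: "PhiV (A\<lparr>carrier := H\<rparr>) C gen = PV"
proof -
  have "\<And>c. c \<in> C \<Longrightarrow> generate (A\<lparr>carrier := H\<rparr>) {gen c} = vstab H c"
  proof -
    fix c assume c: "c \<in> C"
    have "{gen c} \<subseteq> H" using gen(1)[OF c] vstab_H by blast
    then show "generate (A\<lparr>carrier := H\<rparr>) {gen c} = vstab H c"
      using gA.generate_consistent[OF _ subH] gen(2)[OF c] by simp
  qed
  moreover have "carrier (A\<lparr>carrier := H\<rparr>) = H" by simp
  ultimately show ?thesis unfolding PhiV_def PV_def r_coset_consistent
    by (intro Collect_cong) (metis (no_types, lifting))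
qed

lemma PhiE_eq: "PhiE (A\<lparr>carrier := H\<rparr>) C gen = PE"
  unfolding PhiE_def PE_def PhiV_eq by simp

lemma dir2: "\<exists>(G :: (('v \<Rightarrow> 'v) \<times> ('e \<Rightarrow> 'e)) monoid) (I :: 'v set) s. G_graph_via G I s V E \<psi>"
proof (intro exI)
  show "G_graph_via (A\<lparr>carrier := H\<rparr>) C gen V E \<psi>"
    unfolding G_graph_via_def
  proof (intro conjI)
    show "group (A\<lparr>carrier := H\<rparr>)" using subgroup.subgroup_is_group[OF subH grpA] .
    have cG: "carrier (A\<lparr>carrier := H\<rparr>) = H" by simp
    have "gen c \<in> H" if "c \<in> C" for c using gen(1)[OF that] vstab_H by blast
    then show "gen ` C \<subseteq> carrier (A\<lparr>carrier := H\<rparr>)" unfolding cG by (rule image_subsetI)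
    have "\<forall>e\<in>PE. \<psi> (fE e) = fV ` PhiPsi e"
    proof
      fix e assume "e \<in> PE"
      then obtain i j g where "i \<in> C" "j \<in> C" "i \<noteq> j" "g \<in> H" "e = Eijg i j g"
        unfolding PE_char by blast
      then show "\<psi> (fE e) = fV ` PhiPsi e" using compat unfolding PhiPsi_def by blast
    qed
    then show "mg_iso (PhiV (A\<lparr>carrier := H\<rparr>) C gen) (PhiE (A\<lparr>carrier := H\<rparr>) C gen) PhiPsi V E \<psi>"
      unfolding mg_iso_def PhiV_eq PhiE_eq using fV_bij fE_bij by blast
  qed
qed

end

lemma direction2:
  fixes V :: "'v set" and E :: "'e set" and \<psi> :: "'e \<Rightarrow> 'v set"
  assumes "loopless_multigraph V E \<psi>" "char_conditions V E \<psi> H C"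
  shows "\<exists>(G :: (('v \<Rightarrow> 'v) \<times> ('e \<Rightarrow> 'e)) monoid) (I :: 'v set) s. G_graph_via G I s V E \<psi>"
  using d2.dir2[OF d2.intro[OF assms]] .



definition rhoV :: "('g, 'b) monoid_scheme \<Rightarrow> 'g \<Rightarrow> 'i \<times> 'g set \<Rightarrow> 'i \<times> 'g set" where
  "rhoV G x p = (fst p, snd p #>\<^bsub>G\<^esub> inv\<^bsub>G\<^esub> x)"

definition rhoE :: "('g, 'b) monoid_scheme \<Rightarrow> 'g \<Rightarrow> ('i \<times> 'g set) set \<times> 'g \<Rightarrow> ('i \<times> 'g set) set \<times> 'g" where
  "rhoE G x e = (rhoV G x ` fst e, snd e \<otimes>\<^bsub>G\<^esub> inv\<^bsub>G\<^esub> x)"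

locale d1 =
  fixes V :: "'v set" and E :: "'e set" and \<psi> :: "'e \<Rightarrow> 'v set"
    and G :: "('g, 'b) monoid_scheme" and I :: "'i set" and s :: "'i \<Rightarrow> 'g"
    and \<phi> :: "'i \<times> 'g set \<Rightarrow> 'v" and \<gamma> :: "('i \<times> 'g set) set \<times> 'g \<Rightarrow> 'e"
  assumes lm: "loopless_multigraph V E \<psi>" and grp: "group G" and sI: "s ` I \<subseteq> carrier G"
    and bphi: "bij_betw \<phi> (PhiV G I s) V" and bgam: "bij_betw \<gamma> (PhiE G I s) E"
    and comp: "\<forall>e\<in>PhiE G I s. \<psi> (\<gamma> e) = \<phi> ` fst e"
begin

sublocale gG: group G by (rule grp)

abbreviation "A \<equiv> AutGroup V E \<psi>"
abbreviation "PV \<equiv> PhiV G I s"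
abbreviation "PE \<equiv> PhiE G I s"
abbreviation "K i \<equiv> generate G {s i}"

lemma psiV: "e \<in> E \<Longrightarrow> \<psi> e \<subseteq> V"
  using lm unfolding loopless_multigraph_def by force

lemma grpA: "group A"
  by (rule aut_group) (simp add: psiV)

sublocale gA: group A by (rule grpA)

lemma si: "i \<in> I \<Longrightarrow> s i \<in> carrier G" using sI by blast

lemma subK: "i \<in> I \<Longrightarrow> subgroup (K i) G"
  using gG.generate_is_subgroup si by blast

lemma Kc: "i \<in> I \<Longrightarrow> K i \<subseteq> carrier G"
  using subgroup.subset[OF subK] .

lemma PV_iff: "p \<in> PV \<longleftrightarrow> (\<exists>i x. p = (i, K i #>\<^bsub>G\<^esub> x) \<and> i \<in> I \<and> x \<in> carrier G)"
  unfolding PhiV_def by blast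

lemma PV_mem: "i \<in> I \<Longrightarrow> x \<in> carrier G \<Longrightarrow> (i, K i #>\<^bsub>G\<^esub> x) \<in> PV"
  unfolding PV_iff by blast

lemma K_PV: "i \<in> I \<Longrightarrow> (i, K i) \<in> PV"
  using PV_mem[of i "\<one>\<^bsub>G\<^esub>"] gG.coset_mult_one[OF Kc] by simp

lemma PV_sub: "(i, B) \<in> PV \<Longrightarrow> B \<subseteq> carrier G"
  unfolding PV_iff using gG.r_coset_subset_G Kc by blast

lemma PE_iff: "e \<in> PE \<longleftrightarrow> (\<exists>i j A' B g. e = ({(i,A'),(j,B)}, g) \<and> i \<in> I \<and> j \<in> I \<and> i \<noteq> j \<and>
     (i,A') \<in> PV \<and> (j,B) \<in> PV \<and> g \<in> A' \<and> g \<in> B)"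
  unfolding PhiE_def by blast

lemma PE_fst: "e \<in> PE \<Longrightarrow> fst e \<subseteq> PV"
  unfolding PE_iff by auto

lemma PE_snd: "e \<in> PE \<Longrightarrow> snd e \<in> carrier G"
  unfolding PE_iff using PV_sub by fastforce

lemma rhoV_PV: assumes "p \<in> PV" "x \<in> carrier G" shows "rhoV G x p \<in> PV"
proof -
  obtain i y where p: "p = (i, K i #>\<^bsub>G\<^esub> y)" "i \<in> I" "y \<in> carrier G" using assms PV_iff by blast
  have "rhoV G x p = (i, K i #>\<^bsub>G\<^esub> (y \<otimes>\<^bsub>G\<^esub> inv\<^bsub>G\<^esub> x))"
    unfolding rhoV_def p using gG.coset_mult_assoc[OF Kc[OF p(2)] p(3) gG.inv_closed[OF assms(2)]] by simp
  then show ?thesis using PV_mem p assms by simp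
qed

lemma rhoV_comp: assumes "p \<in> PV" "x \<in> carrier G" "y \<in> carrier G"
  shows "rhoV G x (rhoV G y p) = rhoV G (x \<otimes>\<^bsub>G\<^esub> y) p"
proof -
  obtain i B where p: "p = (i, B)" by fastforce
  have B: "B \<subseteq> carrier G" using PV_sub assms(1) p by blast
  show ?thesis unfolding rhoV_def p
    using gG.coset_mult_assoc[OF B gG.inv_closed[OF assms(3)] gG.inv_closed[OF assms(2)]]
      gG.inv_mult_group[OF assms(2,3)] by simp
qed

lemma rhoV_one: assumes "p \<in> PV" shows "rhoV G \<one>\<^bsub>G\<^esub> p = p"
proof -
  obtain i B where p: "p = (i, B)" by fastforce
  have B: "B \<subseteq> carrier G" using PV_sub assms(1) p by blast
  show ?thesis unfolding rhoV_def p using gG.coset_mult_one[OF B] by simp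
qed

lemma rhoE_PE: assumes "e \<in> PE" "x \<in> carrier G" shows "rhoE G x e \<in> PE"
proof -
  obtain i j A' B g where e: "e = ({(i,A'),(j,B)}, g)" "i \<in> I" "j \<in> I" "i \<noteq> j"
     "(i,A') \<in> PV" "(j,B) \<in> PV" "g \<in> A'" "g \<in> B" using assms(1) PE_iff by blast
  have r: "rhoE G x e = ({(i, A' #>\<^bsub>G\<^esub> inv\<^bsub>G\<^esub> x), (j, B #>\<^bsub>G\<^esub> inv\<^bsub>G\<^esub> x)}, g \<otimes>\<^bsub>G\<^esub> inv\<^bsub>G\<^esub> x)"
    unfolding rhoE_def rhoV_def e by simp
  have "(i, A' #>\<^bsub>G\<^esub> inv\<^bsub>G\<^esub> x) \<in> PV" using rhoV_PV[OF e(5) assms(2)] unfolding rhoV_def by simp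
  moreover have "(j, B #>\<^bsub>G\<^esub> inv\<^bsub>G\<^esub> x) \<in> PV" using rhoV_PV[OF e(6) assms(2)] unfolding rhoV_def by simp
  moreover have "g \<otimes>\<^bsub>G\<^esub> inv\<^bsub>G\<^esub> x \<in> A' #>\<^bsub>G\<^esub> inv\<^bsub>G\<^esub> x" "g \<otimes>\<^bsub>G\<^esub> inv\<^bsub>G\<^esub> x \<in> B #>\<^bsub>G\<^esub> inv\<^bsub>G\<^esub> x"
    unfolding r_coset_def using e by blast+
  ultimately show ?thesis unfolding r PE_iff using e by blast
qed

lemma rhoE_comp: assumes "e \<in> PE" "x \<in> carrier G" "y \<in> carrier G"
  shows "rhoE G x (rhoE G y e) = rhoE G (x \<otimes>\<^bsub>G\<^esub> y) e"
proof -
  have "rhoV G x ` rhoV G y ` fst e = rhoV G (x \<otimes>\<^bsub>G\<^esub> y) ` fst e"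
    using rhoV_comp[OF _ assms(2,3)] PE_fst[OF assms(1)] by (force simp: image_comp)
  moreover have "snd e \<otimes>\<^bsub>G\<^esub> inv\<^bsub>G\<^esub> y \<otimes>\<^bsub>G\<^esub> inv\<^bsub>G\<^esub> x = snd e \<otimes>\<^bsub>G\<^esub> inv\<^bsub>G\<^esub> (x \<otimes>\<^bsub>G\<^esub> y)"
    using gG.inv_mult_group[OF assms(2,3)] gG.m_assoc PE_snd[OF assms(1)] assms(2,3) by simp
  ultimately show ?thesis unfolding rhoE_def by simp
qed

lemma rhoE_one: assumes "e \<in> PE" shows "rhoE G \<one>\<^bsub>G\<^esub> e = e"
proof -
  have "rhoV G \<one>\<^bsub>G\<^esub> ` fst e = fst e" using rhoV_one PE_fst[OF assms] by force
  then show ?thesis unfolding rhoE_def using PE_snd[OF assms] by (simp add: prod_eq_iff)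
qed

definition "phi' = inv_into PV \<phi>"
definition "gam' = inv_into PE \<gamma>"

lemma phi_in: "p \<in> PV \<Longrightarrow> \<phi> p \<in> V" using bij_betw_apply[OF bphi] .
lemma gam_in: "e \<in> PE \<Longrightarrow> \<gamma> e \<in> E" using bij_betw_apply[OF bgam] .
lemma phi'_in: "v \<in> V \<Longrightarrow> phi' v \<in> PV"
  unfolding phi'_def using bphi by (metis bij_betw_def inv_into_into)
lemma gam'_in: "e \<in> E \<Longrightarrow> gam' e \<in> PE"
  unfolding gam'_def using bgam by (metis bij_betw_def inv_into_into)
lemma phi'_phi: "p \<in> PV \<Longrightarrow> phi' (\<phi> p) = p"
  unfolding phi'_def using bphi by (simp add: bij_betw_def inv_into_f_f)
lemma phi_phi': "v \<in> V \<Longrightarrow> \<phi> (phi' v) = v"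
  unfolding phi'_def using bphi by (simp add: bij_betw_def f_inv_into_f)
lemma gam'_gam: "e \<in> PE \<Longrightarrow> gam' (\<gamma> e) = e"
  unfolding gam'_def using bgam by (simp add: bij_betw_def inv_into_f_f)
lemma gam_gam': "e \<in> E \<Longrightarrow> \<gamma> (gam' e) = e"
  unfolding gam'_def using bgam by (simp add: bij_betw_def f_inv_into_f)
lemma phi_inj: "p \<in> PV \<Longrightarrow> q \<in> PV \<Longrightarrow> \<phi> p = \<phi> q \<Longrightarrow> p = q"
  using bphi unfolding bij_betw_def inj_on_def by blast
lemma gam_inj: "p \<in> PE \<Longrightarrow> q \<in> PE \<Longrightarrow> \<gamma> p = \<gamma> q \<Longrightarrow> p = q"
  using bgam unfolding bij_betw_def inj_on_def by blast

definition fT :: "'g \<Rightarrow> 'v \<Rightarrow> 'v" where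
  "fT x v = (if v \<in> V then \<phi> (rhoV G x (phi' v)) else v)"
definition gT :: "'g \<Rightarrow> 'e \<Rightarrow> 'e" where
  "gT x e = (if e \<in> E then \<gamma> (rhoE G x (gam' e)) else e)"
definition T :: "'g \<Rightarrow> ('v \<Rightarrow> 'v) \<times> ('e \<Rightarrow> 'e)" where
  "T x = (fT x, gT x)"

lemma fT_phi: "p \<in> PV \<Longrightarrow> fT x (\<phi> p) = \<phi> (rhoV G x p)"
  unfolding fT_def using phi_in phi'_phi by simp
lemma gT_gam: "e \<in> PE \<Longrightarrow> gT x (\<gamma> e) = \<gamma> (rhoE G x e)"
  unfolding gT_def using gam_in gam'_gam by simp
lemma fT_in: "x \<in> carrier G \<Longrightarrow> v \<in> V \<Longrightarrow> fT x v \<in> V"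
  unfolding fT_def using phi_in rhoV_PV phi'_in by simp
lemma gT_in: "x \<in> carrier G \<Longrightarrow> e \<in> E \<Longrightarrow> gT x e \<in> E"
  unfolding gT_def using gam_in rhoE_PE gam'_in by simp
lemma fT_out: "v \<notin> V \<Longrightarrow> fT x v = v" unfolding fT_def by simp
lemma gT_out: "e \<notin> E \<Longrightarrow> gT x e = e" unfolding gT_def by simp

lemma fT_mult: assumes "x \<in> carrier G" "y \<in> carrier G" shows "fT x (fT y v) = fT (x \<otimes>\<^bsub>G\<^esub> y) v"
proof (cases "v \<in> V")
  case True
  have p: "phi' v \<in> PV" using phi'_in[OF True] .
  have "fT x (fT y v) = fT x (\<phi> (rhoV G y (phi' v)))" unfolding fT_def using True by simp
  also have "\<dots> = \<phi> (rhoV G x (rhoV G y (phi' v)))" using fT_phi rhoV_PV[OF p assms(2)] by blast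
  also have "\<dots> = \<phi> (rhoV G (x \<otimes>\<^bsub>G\<^esub> y) (phi' v))" using rhoV_comp[OF p assms] by simp
  also have "\<dots> = fT (x \<otimes>\<^bsub>G\<^esub> y) v" unfolding fT_def using True by simp
  finally show ?thesis .
qed (simp add: fT_def)

lemma gT_mult: assumes "x \<in> carrier G" "y \<in> carrier G" shows "gT x (gT y v) = gT (x \<otimes>\<^bsub>G\<^esub> y) v"
proof (cases "v \<in> E")
  case True
  have p: "gam' v \<in> PE" using gam'_in[OF True] .
  have "gT x (gT y v) = gT x (\<gamma> (rhoE G y (gam' v)))" unfolding gT_def using True by simp
  also have "\<dots> = \<gamma> (rhoE G x (rhoE G y (gam' v)))" using gT_gam rhoE_PE[OF p assms(2)] by blast
  also have "\<dots> = \<gamma> (rhoE G (x \<otimes>\<^bsub>G\<^esub> y) (gam' v))" using rhoE_comp[OF p assms] by simp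
  also have "\<dots> = gT (x \<otimes>\<^bsub>G\<^esub> y) v" unfolding gT_def using True by simp
  finally show ?thesis .
qed (simp add: gT_def)

lemma fT_one: "fT \<one>\<^bsub>G\<^esub> v = v"
  unfolding fT_def using rhoV_one phi'_in phi_phi' by simp
lemma gT_one: "gT \<one>\<^bsub>G\<^esub> v = v"
  unfolding gT_def using rhoE_one gam'_in gam_gam' by simp

lemma fT_bij: assumes "x \<in> carrier G" shows "bij_betw (fT x) V V"
proof (rule bij_betw_byWitness[where f' = "fT (inv\<^bsub>G\<^esub> x)"])
  have xi: "inv\<^bsub>G\<^esub> x \<in> carrier G" using assms by simp
  show "\<forall>a\<in>V. fT (inv\<^bsub>G\<^esub> x) (fT x a) = a" using fT_mult[OF xi assms] gG.l_inv[OF assms] fT_one by simp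
  show "\<forall>a\<in>V. fT x (fT (inv\<^bsub>G\<^esub> x) a) = a" using fT_mult[OF assms xi] gG.r_inv[OF assms] fT_one by simp
  show "fT x ` V \<subseteq> V" using fT_in[OF assms] by blast
  show "fT (inv\<^bsub>G\<^esub> x) ` V \<subseteq> V" using fT_in[OF xi] by blast
qed

lemma gT_bij: assumes "x \<in> carrier G" shows "bij_betw (gT x) E E"
proof (rule bij_betw_byWitness[where f' = "gT (inv\<^bsub>G\<^esub> x)"])
  have xi: "inv\<^bsub>G\<^esub> x \<in> carrier G" using assms by simp
  show "\<forall>a\<in>E. gT (inv\<^bsub>G\<^esub> x) (gT x a) = a" using gT_mult[OF xi assms] gG.l_inv[OF assms] gT_one by simp
  show "\<forall>a\<in>E. gT x (gT (inv\<^bsub>G\<^esub> x) a) = a" using gT_mult[OF assms xi] gG.r_inv[OF assms] gT_one by simp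
  show "gT x ` E \<subseteq> E" using gT_in[OF assms] by blast
  show "gT (inv\<^bsub>G\<^esub> x) ` E \<subseteq> E" using gT_in[OF xi] by blast
qed

lemma T_compat: assumes "x \<in> carrier G" "e \<in> E" shows "\<psi> (gT x e) = fT x ` \<psi> e"
proof -
  define e0 where "e0 = gam' e"
  have e0: "e0 \<in> PE" "e = \<gamma> e0" unfolding e0_def using gam'_in gam_gam' assms by auto
  have r: "rhoE G x e0 \<in> PE" using rhoE_PE[OF e0(1) assms(1)] .
  have 1: "\<psi> (gT x e) = \<psi> (\<gamma> (rhoE G x e0))" using gT_gam e0 by simp
  have 2: "\<psi> (\<gamma> (rhoE G x e0)) = \<phi> ` fst (rhoE G x e0)" using comp r by blast
  have 3: "fst (rhoE G x e0) = rhoV G x ` fst e0" unfolding rhoE_def by simp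
  have 4: "\<phi> ` rhoV G x ` fst e0 = fT x ` \<phi> ` fst e0"
    unfolding image_comp comp_def
  proof (rule image_cong[OF refl])
    fix p assume "p \<in> fst e0"
    then have "p \<in> PV" using PE_fst[OF e0(1)] by blast
    then show "\<phi> (rhoV G x p) = fT x (\<phi> p)" by (simp add: fT_phi)
  qed
  have 5: "\<psi> e = \<phi> ` fst e0" using comp e0 by blast
  show ?thesis using 1 2 3 4 5 by simp
qed

lemma T_aut: "x \<in> carrier G \<Longrightarrow> T x \<in> aut V E \<psi>"
  unfolding T_def aut_def using fT_bij gT_bij fT_out gT_out T_compat by simp

lemma T_mult: assumes "x \<in> carrier G" "y \<in> carrier G" shows "T (x \<otimes>\<^bsub>G\<^esub> y) = T x \<otimes>\<^bsub>A\<^esub> T y"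
  unfolding T_def using fT_mult[OF assms] gT_mult[OF assms] by (simp add: fun_eq_iff)

lemma T_hom: "T \<in> hom G A"
  unfolding hom_def using T_aut T_mult by auto

sublocale Th: group_hom G A T
  by (unfold_locales) (rule T_hom)

lemma T_one: "T \<one>\<^bsub>G\<^esub> = (id, id)"
  unfolding T_def using fT_one gT_one by (simp add: fun_eq_iff)

definition "Hs = T ` carrier G"
definition "ci i = \<phi> (i, K i)"
definition "Cs = ci ` I"
definition "Ob i = \<phi> ` {q \<in> PV. fst q = i}"

lemma Hs_sub: "subgroup Hs A" unfolding Hs_def by (rule Th.img_is_subgroup)

lemma coset_move: assumes "i \<in> I" "y \<in> carrier G" "z \<in> carrier G"
  shows "rhoV G (inv\<^bsub>G\<^esub> z \<otimes>\<^bsub>G\<^esub> y) (i, K i #>\<^bsub>G\<^esub> y) = (i, K i #>\<^bsub>G\<^esub> z)"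
proof -
  have xc: "inv\<^bsub>G\<^esub> z \<otimes>\<^bsub>G\<^esub> y \<in> carrier G" using assms by simp
  have "inv\<^bsub>G\<^esub> (inv\<^bsub>G\<^esub> z \<otimes>\<^bsub>G\<^esub> y) = inv\<^bsub>G\<^esub> y \<otimes>\<^bsub>G\<^esub> z"
    using gG.inv_mult_group[OF gG.inv_closed[OF assms(3)] assms(2)] assms(3) by simp
  then have "y \<otimes>\<^bsub>G\<^esub> inv\<^bsub>G\<^esub> (inv\<^bsub>G\<^esub> z \<otimes>\<^bsub>G\<^esub> y) = z"
    using assms(2,3) by (simp add: gG.m_assoc[symmetric])
  moreover have "(K i #>\<^bsub>G\<^esub> y) #>\<^bsub>G\<^esub> inv\<^bsub>G\<^esub> (inv\<^bsub>G\<^esub> z \<otimes>\<^bsub>G\<^esub> y) = K i #>\<^bsub>G\<^esub> (y \<otimes>\<^bsub>G\<^esub> inv\<^bsub>G\<^esub> (inv\<^bsub>G\<^esub> z \<otimes>\<^bsub>G\<^esub> y))"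
    using gG.coset_mult_assoc[OF Kc[OF assms(1)] assms(2) gG.inv_closed[OF xc]] .
  ultimately show ?thesis unfolding rhoV_def by simp
qed

lemma orbit_eq: assumes "p \<in> PV" shows "vorbit Hs (\<phi> p) = Ob (fst p)"
proof
  show "vorbit Hs (\<phi> p) \<subseteq> Ob (fst p)"
  proof
    fix w assume "w \<in> vorbit Hs (\<phi> p)"
    then obtain x where x: "x \<in> carrier G" "w = fst (T x) (\<phi> p)" unfolding vorbit_def Hs_def by blast
    have "w = \<phi> (rhoV G x p)" using x fT_phi[OF assms] unfolding T_def by simp
    moreover have "rhoV G x p \<in> PV" using rhoV_PV[OF assms x(1)] .
    moreover have "fst (rhoV G x p) = fst p" unfolding rhoV_def by simp
    ultimately show "w \<in> Ob (fst p)" unfolding Ob_def by blast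
  qed
  show "Ob (fst p) \<subseteq> vorbit Hs (\<phi> p)"
  proof
    fix w assume "w \<in> Ob (fst p)"
    then obtain q where q: "q \<in> PV" "fst q = fst p" "w = \<phi> q" unfolding Ob_def by blast
    obtain i y where p: "p = (i, K i #>\<^bsub>G\<^esub> y)" "i \<in> I" "y \<in> carrier G" using assms PV_iff by blast
    obtain j z where q2: "q = (j, K j #>\<^bsub>G\<^esub> z)" "j \<in> I" "z \<in> carrier G" using q(1) PV_iff by blast
    have ij: "j = i" using q(2) p q2 by simp
    define x where "x = inv\<^bsub>G\<^esub> z \<otimes>\<^bsub>G\<^esub> y"
    have xc: "x \<in> carrier G" unfolding x_def using p q2 by simp
    have "rhoV G x p = q" unfolding x_def p q2 ij using coset_move p q2 by simp
    then have "w = fst (T x) (\<phi> p)" using q(3) fT_phi[OF assms] unfolding T_def by simp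
    then show "w \<in> vorbit Hs (\<phi> p)" unfolding vorbit_def Hs_def using xc by blast
  qed
qed

lemma ci_PV: "i \<in> I \<Longrightarrow> (i, K i) \<in> PV" by (rule K_PV)
lemma ci_V: "i \<in> I \<Longrightarrow> ci i \<in> V" unfolding ci_def using phi_in K_PV by blast
lemma ci_orb: "i \<in> I \<Longrightarrow> vorbit Hs (ci i) = Ob i" unfolding ci_def using orbit_eq[OF K_PV] by simp
lemma ci_Ob: "i \<in> I \<Longrightarrow> ci i \<in> Ob i" unfolding ci_def Ob_def using K_PV by force
lemma ci_Ob_iff: assumes "i \<in> I" "ci i \<in> Ob j" shows "i = j"
proof -
  obtain q where q: "q \<in> PV" "fst q = j" "\<phi> (i, K i) = \<phi> q" using assms(2) unfolding Ob_def ci_def by blast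
  then have "(i, K i) = q" using phi_inj K_PV[OF assms(1)] by blast
  then show ?thesis using q by auto
qed

lemma orbits_eq: "vorbits Hs V = Ob ` I"
proof
  show "vorbits Hs V \<subseteq> Ob ` I"
  proof
    fix Ob0 assume "Ob0 \<in> vorbits Hs V"
    then obtain v where v: "v \<in> V" "Ob0 = vorbit Hs v" unfolding vorbits_def by blast
    have p: "phi' v \<in> PV" using phi'_in[OF v(1)] .
    then have "fst (phi' v) \<in> I" unfolding PV_iff by auto
    moreover have "Ob0 = Ob (fst (phi' v))" using v orbit_eq[OF p] phi_phi'[OF v(1)] by simp
    ultimately show "Ob0 \<in> Ob ` I" by blast
  qed
  show "Ob ` I \<subseteq> vorbits Hs V"
    unfolding vorbits_def using ci_orb ci_V by (metis image_eqI image_subsetI)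
qed

lemma Ob_V: "i \<in> I \<Longrightarrow> Ob i \<subseteq> V" unfolding Ob_def using phi_in by blast

lemma Ob_stable: assumes "i \<in> I" shows "stable_set V E \<psi> (Ob i)"
  unfolding stable_set_def
proof (intro conjI ballI impI notI)
  show "Ob i \<subseteq> V" using Ob_V[OF assms] .
  fix u v assume u: "u \<in> Ob i" and v: "v \<in> Ob i" and ne: "u \<noteq> v" and adj: "adjacent E \<psi> u v"
  obtain p where p: "p \<in> PV" "fst p = i" "u = \<phi> p" using u unfolding Ob_def by blast
  obtain q where q: "q \<in> PV" "fst q = i" "v = \<phi> q" using v unfolding Ob_def by blast
  obtain e where e: "e \<in> E" "\<psi> e = {u, v}" using adj unfolding adjacent_def by blast
  define e' where "e' = gam' e"
  have e': "e' \<in> PE" "e = \<gamma> e'" unfolding e'_def using gam'_in gam_gam' e(1) by auto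
  obtain i1 j1 A1 B1 g where e'2: "e' = ({(i1,A1),(j1,B1)}, g)" "i1 \<noteq> j1" "(i1,A1) \<in> PV" "(j1,B1) \<in> PV"
    using e'(1) PE_iff by blast
  have im: "\<phi> ` {(i1,A1),(j1,B1)} = \<phi> ` {p, q}"
    using comp[rule_format, OF e'(1)] e'(2) e(2) p q e'2(1) by simp
  have sub: "{(i1,A1),(j1,B1)} \<subseteq> PV" "{p,q} \<subseteq> PV" using p q e'2 by auto
  have "{(i1,A1),(j1,B1)} = {p, q}"
    using inj_on_image_eq_iff[OF bij_betw_imp_inj_on[OF bphi] sub] im by blast
  then have "fst ` {(i1,A1),(j1,B1)} = fst ` {p, q}" by simp
  then have "{i1, j1} = {i}" using p q by simp
  then show False using e'2(2) by (metis insertI1 insert_commute singletonD)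
qed

lemma Cs_clique: "clique V E \<psi> Cs"
  unfolding clique_def
proof (intro conjI ballI impI)
  show "Cs \<subseteq> V" unfolding Cs_def using ci_V by blast
  fix u v assume u: "u \<in> Cs" and v: "v \<in> Cs" and ne: "u \<noteq> v"
  obtain i where i: "i \<in> I" "u = ci i" using u unfolding Cs_def by blast
  obtain j where j: "j \<in> I" "v = ci j" using v unfolding Cs_def by blast
  have ij: "i \<noteq> j" using ne i j by blast
  have one: "\<one>\<^bsub>G\<^esub> \<in> K i" "\<one>\<^bsub>G\<^esub> \<in> K j" using subgroup.one_closed[OF subK] i j by auto
  have "({(i, K i), (j, K j)}, \<one>\<^bsub>G\<^esub>) \<in> PE" unfolding PE_iff using i j ij K_PV one by blast
  moreover have "\<psi> (\<gamma> ({(i, K i), (j, K j)}, \<one>\<^bsub>G\<^esub>)) = {u, v}"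
    using comp[rule_format, OF calculation] i j unfolding ci_def by simp
  ultimately show "adjacent E \<psi> u v" unfolding adjacent_def using gam_in by blast
qed

lemma stab_iff: assumes "i \<in> I" "x \<in> carrier G" shows "fst (T x) (ci i) = ci i \<longleftrightarrow> x \<in> K i"
proof -
  have "fst (T x) (ci i) = \<phi> (rhoV G x (i, K i))" unfolding T_def ci_def using fT_phi[OF K_PV[OF assms(1)]] by simp
  then have "fst (T x) (ci i) = ci i \<longleftrightarrow> rhoV G x (i, K i) = (i, K i)"
    unfolding ci_def using phi_inj rhoV_PV[OF K_PV[OF assms(1)] assms(2)] K_PV[OF assms(1)] by metis
  also have "\<dots> \<longleftrightarrow> K i #>\<^bsub>G\<^esub> inv\<^bsub>G\<^esub> x = K i" unfolding rhoV_def by simp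
  also have "\<dots> \<longleftrightarrow> inv\<^bsub>G\<^esub> x \<in> K i"
    using gG.coset_join1[OF _ _ subK[OF assms(1)]] gG.coset_join2[OF _ subK[OF assms(1)]] assms(2) by blast
  also have "\<dots> \<longleftrightarrow> x \<in> K i"
    using subgroup.m_inv_closed[OF subK[OF assms(1)]] gG.inv_inv[OF assms(2)] by metis
  finally show ?thesis .
qed

lemma stab_eq: assumes "i \<in> I" shows "vstab Hs (ci i) = T ` K i"
proof
  show "vstab Hs (ci i) \<subseteq> T ` K i"
  proof
    fix h assume "h \<in> vstab Hs (ci i)"
    then obtain x where "x \<in> carrier G" "h = T x" "fst (T x) (ci i) = ci i"
      unfolding vstab_def Hs_def by blast
    then show "h \<in> T ` K i" using stab_iff[OF assms] by blast
  qed
  show "T ` K i \<subseteq> vstab Hs (ci i)"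
  proof
    fix h assume "h \<in> T ` K i"
    then obtain x where x: "x \<in> K i" "h = T x" by blast
    have xc: "x \<in> carrier G" using x Kc[OF assms] by blast
    then show "h \<in> vstab Hs (ci i)" unfolding vstab_def Hs_def using stab_iff[OF assms xc] x by blast
  qed
qed

lemma stab_cyclic: assumes "i \<in> I" shows "cyclic_group (subgroup_generated A (vstab Hs (ci i)))"
proof -
  have sub: "subgroup (T ` K i) A" using Th.subgroup_img_is_subgroup[OF subK[OF assms]] .
  have "T ` K i = generate A (T ` {s i})" using Th.generate_img[of "{s i}"] si[OF assms] by simp
  then have "T ` K i = generate A {T (s i)}" by simp
  moreover have "T (s i) \<in> T ` K i" using generate.incl[of "s i" "{s i}" G] by blast
  ultimately have "\<exists>x\<in>T ` K i. T ` K i = generate A {x}" by blast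
  then show ?thesis unfolding stab_eq[OF assms] using cyclic_sub_iff[OF grpA sub] by blast
qed

abbreviation Eg where "Eg i j g \<equiv> ({(i, K i),(j, K j #>\<^bsub>G\<^esub> g)}, g)"

lemma Kc2: "i \<in> I \<Longrightarrow> g \<in> K i \<Longrightarrow> g \<in> carrier G" using Kc by blast

lemma Eg_PE: assumes "i \<in> I" "j \<in> I" "i \<noteq> j" "g \<in> K i" shows "Eg i j g \<in> PE"
proof -
  have gc: "g \<in> carrier G" using Kc2 assms by blast
  have "g \<in> K j #>\<^bsub>G\<^esub> g" using gG.rcos_self[OF gc subK[OF assms(2)]] .
  then show ?thesis unfolding PE_iff using assms K_PV PV_mem[OF assms(2) gc] by blast
qed

lemma Eg_act: assumes "i \<in> I" "j \<in> I" "i \<noteq> j" "g \<in> K i" "x \<in> K i"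
  shows "snd (T x) (\<gamma> (Eg i j g)) = \<gamma> (Eg i j (g \<otimes>\<^bsub>G\<^esub> inv\<^bsub>G\<^esub> x))"
proof -
  have gc: "g \<in> carrier G" and xc: "x \<in> carrier G" using Kc2 assms by blast+
  have "snd (T x) (\<gamma> (Eg i j g)) = \<gamma> (rhoE G x (Eg i j g))"
    unfolding T_def using gT_gam[OF Eg_PE[OF assms(1-4)]] by simp
  moreover have "rhoE G x (Eg i j g) = Eg i j (g \<otimes>\<^bsub>G\<^esub> inv\<^bsub>G\<^esub> x)"
  proof -
    have "K i #>\<^bsub>G\<^esub> inv\<^bsub>G\<^esub> x = K i"
      using gG.coset_join2[OF _ subK[OF assms(1)]] subgroup.m_inv_closed[OF subK[OF assms(1)] assms(5)] xc by simp
    moreover have "(K j #>\<^bsub>G\<^esub> g) #>\<^bsub>G\<^esub> inv\<^bsub>G\<^esub> x = K j #>\<^bsub>G\<^esub> (g \<otimes>\<^bsub>G\<^esub> inv\<^bsub>G\<^esub> x)"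
      using gG.coset_mult_assoc[OF Kc[OF assms(2)] gc gG.inv_closed[OF xc]] .
    ultimately show ?thesis unfolding rhoE_def rhoV_def by simp
  qed
  ultimately show ?thesis by simp
qed

lemma edges_char: assumes "i \<in> I" "j \<in> I" "i \<noteq> j"
  shows "e \<in> edges_to E \<psi> (ci i) (Ob j) \<longleftrightarrow> (\<exists>g\<in>K i. e = \<gamma> (Eg i j g))"
proof
  assume "e \<in> edges_to E \<psi> (ci i) (Ob j)"
  then obtain w where e: "e \<in> E" "w \<in> Ob j" "\<psi> e = {ci i, w}" unfolding edges_to_def by blast
  obtain q where q: "q \<in> PV" "fst q = j" "w = \<phi> q" using e(2) unfolding Ob_def by blast
  obtain z where z: "q = (j, K j #>\<^bsub>G\<^esub> z)" "z \<in> carrier G" using q(1,2) PV_iff by auto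
  define e' where "e' = gam' e"
  have e': "e' \<in> PE" "e = \<gamma> e'" unfolding e'_def using gam'_in gam_gam' e(1) by auto
  obtain i1 j1 A1 B1 g where e'2: "e' = ({(i1,A1),(j1,B1)}, g)" "(i1,A1) \<in> PV" "(j1,B1) \<in> PV"
     "g \<in> A1" "g \<in> B1"
    using e'(1) PE_iff by blast
  have im: "\<phi> ` {(i1,A1),(j1,B1)} = \<phi> ` {(i, K i), q}"
    using comp[rule_format, OF e'(1)] e'(2) e(3) q e'2(1) unfolding ci_def by simp
  have sub: "{(i1,A1),(j1,B1)} \<subseteq> PV" "{(i, K i), q} \<subseteq> PV" using q(1) e'2(2,3) K_PV[OF assms(1)] by simp_all
  have P: "{(i1,A1),(j1,B1)} = {(i, K i), q}"
    by (rule iffD1[OF inj_on_image_eq_iff[OF bij_betw_imp_inj_on[OF bphi] sub] im])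
  have D: "((i1,A1) = (i,K i) \<and> (j1,B1) = q) \<or> ((i1,A1) = q \<and> (j1,B1) = (i,K i))"
    using P by (simp only: doubleton_eq_iff)
  have "g \<in> K i \<and> g \<in> K j #>\<^bsub>G\<^esub> z"
    using D
  proof (elim disjE conjE)
    assume "(i1,A1) = (i,K i)" "(j1,B1) = q"
    then have "A1 = K i" "B1 = K j #>\<^bsub>G\<^esub> z" using z(1) by auto
    then show ?thesis using e'2(4,5) by simp
  next
    assume "(i1,A1) = q" "(j1,B1) = (i,K i)"
    then have "B1 = K i" "A1 = K j #>\<^bsub>G\<^esub> z" using z(1) by auto
    then show ?thesis using e'2(4,5) by simp
  qed
  then have gKi: "g \<in> K i" and gq: "g \<in> K j #>\<^bsub>G\<^esub> z" by auto
  have "K j #>\<^bsub>G\<^esub> z = K j #>\<^bsub>G\<^esub> g" using gG.repr_independence[OF gq z(2) subK[OF assms(2)]] .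
  then have "fst e' = fst (Eg i j g)" using e'2(1) P z(1) by simp
  then have "e' = Eg i j g" using e'2(1) by (simp add: prod_eq_iff)
  then show "\<exists>g\<in>K i. e = \<gamma> (Eg i j g)" using gKi e'(2) by blast
next
  assume "\<exists>g\<in>K i. e = \<gamma> (Eg i j g)"
  then obtain g where g: "g \<in> K i" "e = \<gamma> (Eg i j g)" by blast
  have gc: "g \<in> carrier G" using Kc2 assms g by blast
  have PE: "Eg i j g \<in> PE" using Eg_PE[OF assms g(1)] .
  have "\<psi> e = {ci i, \<phi> (j, K j #>\<^bsub>G\<^esub> g)}" using comp[rule_format, OF PE] g(2) unfolding ci_def by simp
  moreover have "\<phi> (j, K j #>\<^bsub>G\<^esub> g) \<in> Ob j" unfolding Ob_def using PV_mem[OF assms(2) gc] by force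
  moreover have "e \<in> E" using gam_in[OF PE] g(2) by simp
  ultimately show "e \<in> edges_to E \<psi> (ci i) (Ob j)" unfolding edges_to_def by blast
qed

lemma regular: assumes "i \<in> I" "j \<in> I" "i \<noteq> j"
  shows "regular_action (vstab Hs (ci i)) (\<lambda>h e. snd h e) (edges_to E \<psi> (ci i) (Ob j))"
  unfolding regular_action_def stab_eq[OF assms(1)]
proof (intro ballI)
  fix e e' assume "e \<in> edges_to E \<psi> (ci i) (Ob j)" "e' \<in> edges_to E \<psi> (ci i) (Ob j)"
  then obtain g g' where g: "g \<in> K i" "e = \<gamma> (Eg i j g)" and g': "g' \<in> K i" "e' = \<gamma> (Eg i j g')"
    using edges_char[OF assms] by blast
  have gc: "g \<in> carrier G" and gc': "g' \<in> carrier G" using Kc2 assms g g' by blast+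
  have sK: "subgroup (K i) G" using subK[OF assms(1)] .
  define x where "x = inv\<^bsub>G\<^esub> g' \<otimes>\<^bsub>G\<^esub> g"
  have xK: "x \<in> K i" unfolding x_def using subgroup.m_closed[OF sK subgroup.m_inv_closed[OF sK g'(1)] g(1)] .
  have "g \<otimes>\<^bsub>G\<^esub> inv\<^bsub>G\<^esub> x = g'"
  proof -
    have "inv\<^bsub>G\<^esub> x = inv\<^bsub>G\<^esub> g \<otimes>\<^bsub>G\<^esub> g'"
      unfolding x_def using gG.inv_mult_group[OF gG.inv_closed[OF gc'] gc] gc' by simp
    then show ?thesis using gc gc' by (simp add: gG.m_assoc[symmetric])
  qed
  then have ex: "snd (T x) e = e'" using Eg_act[OF assms g(1) xK] g g' by simp
  show "\<exists>!k. k \<in> T ` K i \<and> snd k e = e'"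
  proof (rule ex1I[of _ "T x"])
    show "T x \<in> T ` K i \<and> snd (T x) e = e'" using xK ex by blast
    fix k assume k: "k \<in> T ` K i \<and> snd k e = e'"
    then obtain y where y: "y \<in> K i" "k = T y" by blast
    have yc: "y \<in> carrier G" and xc: "x \<in> carrier G" using Kc2 assms y xK by blast+
    have eqg: "\<gamma> (Eg i j (g \<otimes>\<^bsub>G\<^esub> inv\<^bsub>G\<^esub> y)) = \<gamma> (Eg i j (g \<otimes>\<^bsub>G\<^esub> inv\<^bsub>G\<^esub> x))"
      using Eg_act[OF assms g(1) y(1)] Eg_act[OF assms g(1) xK] k y ex g by simp
    have m1: "g \<otimes>\<^bsub>G\<^esub> inv\<^bsub>G\<^esub> y \<in> K i"
      using subgroup.m_closed[OF sK g(1) subgroup.m_inv_closed[OF sK y(1)]] .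
    have m2: "g \<otimes>\<^bsub>G\<^esub> inv\<^bsub>G\<^esub> x \<in> K i"
      using subgroup.m_closed[OF sK g(1) subgroup.m_inv_closed[OF sK xK]] .
    have "Eg i j (g \<otimes>\<^bsub>G\<^esub> inv\<^bsub>G\<^esub> y) = Eg i j (g \<otimes>\<^bsub>G\<^esub> inv\<^bsub>G\<^esub> x)"
      by (rule gam_inj[OF Eg_PE[OF assms m1] Eg_PE[OF assms m2] eqg])
    then have "g \<otimes>\<^bsub>G\<^esub> inv\<^bsub>G\<^esub> y = g \<otimes>\<^bsub>G\<^esub> inv\<^bsub>G\<^esub> x" by simp
    then have "inv\<^bsub>G\<^esub> y = inv\<^bsub>G\<^esub> x" using gc yc xc by simp
    then have "y = x" using gG.inv_inv yc xc by metis
    then show "k = T x" using y by simp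
  qed
qed

lemma dir1: "\<exists>H C. char_conditions V E \<psi> H C"
proof (intro exI)
  show "char_conditions V E \<psi> Hs Cs"
    unfolding char_conditions_def
  proof (intro conjI ballI impI)
    show "subgroup Hs A" by (rule Hs_sub)
    show "clique V E \<psi> Cs" by (rule Cs_clique)
    fix Orb assume "Orb \<in> vorbits Hs V"
    then obtain j where j: "j \<in> I" "Orb = Ob j" using orbits_eq by blast
    show "stable_set V E \<psi> Orb" using Ob_stable j by simp
    show "Cs \<inter> Orb \<noteq> {}" using ci_Ob[OF j(1)] j unfolding Cs_def by blast
  next
    fix u assume "u \<in> Cs"
    then obtain i where i: "i \<in> I" "u = ci i" unfolding Cs_def by blast
    show "cyclic_group (subgroup_generated A (vstab Hs u))" using stab_cyclic i by simp
  next
    fix u Orb assume "u \<in> Cs" "Orb \<in> vorbits Hs V" "u \<notin> Orb"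
    then obtain i j where i: "i \<in> I" "u = ci i" and j: "j \<in> I" "Orb = Ob j"
      unfolding Cs_def using orbits_eq by blast
    have "i \<noteq> j" using ci_Ob[OF i(1)] i j \<open>u \<notin> Orb\<close> by blast
    then show "regular_action (vstab Hs u) (\<lambda>h e. snd h e) (edges_to E \<psi> u Orb)"
      using regular i j by simp
  qed
qed

end

lemma direction1:
  fixes V :: "'v set" and E :: "'e set" and \<psi> :: "'e \<Rightarrow> 'v set"
    and G :: "('g, 'b) monoid_scheme" and I :: "'i set"
  assumes "loopless_multigraph V E \<psi>" "G_graph_via G I s V E \<psi>"
  shows "\<exists>H C. char_conditions V E \<psi> H C"
proof -
  have g: "group G" "s ` I \<subseteq> carrier G" "mg_iso (PhiV G I s) (PhiE G I s) PhiPsi V E \<psi>"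
    using assms(2) unfolding G_graph_via_def by auto
  then obtain f h where "bij_betw f (PhiV G I s) V" "bij_betw h (PhiE G I s) E"
     "\<forall>e\<in>PhiE G I s. \<psi> (h e) = f ` fst e"
    unfolding mg_iso_def PhiPsi_def by blast
  then show ?thesis using d1.dir1[OF d1.intro[OF assms(1) g(1,2)]] by blast
qed


theorem corollary2:
  fixes V :: "'v set" and E :: "'e set" and \<psi> :: "'e \<Rightarrow> 'v set"
  assumes "loopless_multigraph V E \<psi>"
  shows "(\<forall>(G :: ('g, 'b) monoid_scheme) (I :: 'i set) s.
            G_graph_via G I s V E \<psi> \<longrightarrow> (\<exists>H C. char_conditions V E \<psi> H C))
       \<and> ((\<exists>H C. char_conditions V E \<psi> H C) \<longrightarrow>
            (\<exists>(G :: (('v \<Rightarrow> 'v) \<times> ('e \<Rightarrow> 'e)) monoid) (I :: 'v set) s. G_graph_via G I s V E \<psi>))"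
proof (intro conjI allI impI)
  fix G :: "('g, 'b) monoid_scheme" and I :: "'i set" and s
  assume "G_graph_via G I s V E \<psi>"
  then show "\<exists>H C. char_conditions V E \<psi> H C" using direction1[OF assms] by blast
next
  assume "\<exists>H C. char_conditions V E \<psi> H C"
  then show "\<exists>(G :: (('v \<Rightarrow> 'v) \<times> ('e \<Rightarrow> 'e)) monoid) (I :: 'v set) s. G_graph_via G I s V E \<psi>"
    using direction2[OF assms] by blast
qed

end
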